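(* Let $p(\cdot)\in\mathcal{P}(\mathbb{R}^n)$, $1\le q,\alpha\le\infty$, with $p(x)\le\alpha\le q$ for all $x$. For any constant $\rho\in(0,\infty)$ and $r>0$, $$\Big\|\,\|f\chi_{B(\cdot,r)}\|_{L^{p(\cdot)}}\Big\|_{L^q}\sim\Big\|\,\|f\chi_{B(\cdot,\rho r)}\|_{L^{p(\cdot)}}\Big\|_{L^q},$$ where the positive equivalence constants are independent of $f$.
   Context: $\mathcal{P}(\mathbb{R}^n)$: measurable $p(\cdot):\mathbb{R}^n\to[1,\infty)$ with $\operatorname{ess\,inf}p>1$, $\operatorname{ess\,sup}p<\infty$. $\|f\|_{L^{p(\cdot)}}=\inf\{\lambda>0:\int(|f(x)|/\lambda)^{p(x)}dx\le1\}$. $B(x,r)$ is the open ball; the outer $L^q$ norm is taken in the center variable $x$ of $x\mapsto\|f\chi_{B(x,r)}\|_{L^{p(\cdot)}}$. *)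

theory Defs
  imports "HOL-Analysis.Analysis" "HOL-Probability.Essential_Supremum"
begin

text \<open>Variable exponents: the class P(R^n). ess inf p > 1 and ess sup p < infinity,
  written out as almost-everywhere bounds.\<close>
definition var_exp :: "('a::euclidean_space \<Rightarrow> real) \<Rightarrow> bool" where
  "var_exp p \<longleftrightarrow> p \<in> borel_measurable lebesgue \<and> (\<forall>x. 1 \<le> p x)
     \<and> (\<exists>c>1. AE x in lebesgue. c \<le> p x) \<and> (\<exists>C. AE x in lebesgue. p x \<le> C)"

text \<open>Luxemburg norm of L^{p(.)}, valued in [0,infinity] (Inf of the empty set is infinity).\<close>
definition var_norm :: "('a::euclidean_space \<Rightarrow> real) \<Rightarrow> ('a \<Rightarrow> real) \<Rightarrow> ennreal" where
  "var_norm p f = Inf (ennreal ` {lam. lam > 0 \<and>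
      (\<integral>\<^sup>+ x. ennreal ((\<bar>f x\<bar> / lam) powr p x) \<partial>lebesgue) \<le> 1})"

definition ennpow :: "ennreal \<Rightarrow> real \<Rightarrow> ennreal" where
  "ennpow a s = (if a = top then top else ennreal (enn2real a powr s))"

definition Lq_norm :: "ennreal \<Rightarrow> ('a::euclidean_space \<Rightarrow> ennreal) \<Rightarrow> ennreal" where
  "Lq_norm q g = (if q = top then esssup lebesgue g
     else ennpow (\<integral>\<^sup>+ x. ennpow (g x) (enn2real q) \<partial>lebesgue) (1 / enn2real q))"

definition amalg_norm :: "('a::euclidean_space \<Rightarrow> real) \<Rightarrow> ennreal \<Rightarrow> real \<Rightarrow> ('a \<Rightarrow> real) \<Rightarrow> ennreal" where
  "amalg_norm p q r f = Lq_norm q (\<lambda>x. var_norm p (\<lambda>y. f y * indicator (ball x r) y))"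

end

theory Submission
  imports Defs
begin

lemma var_norm_le:
  assumes "lam > 0" "(\<integral>\<^sup>+ x. ennreal ((\<bar>g x\<bar> / lam) powr p x) \<partial>lebesgue) \<le> 1"
  shows "var_norm p g \<le> ennreal lam"
  unfolding var_norm_def using assms by (intro Inf_lower) auto

lemma modular_anti:
  assumes "0 < lam" "lam \<le> a" "\<And>x. 0 \<le> p x"
  shows "(\<integral>\<^sup>+ x. ennreal ((\<bar>g x\<bar> / a) powr p x) \<partial>lebesgue)
      \<le> (\<integral>\<^sup>+ x. ennreal ((\<bar>g x\<bar> / lam) powr p x) \<partial>lebesgue)"
proof (intro nn_integral_mono ennreal_leI)
  fix x
  have "\<bar>g x\<bar> / a \<le> \<bar>g x\<bar> / lam" using assms by (intro divide_left_mono) auto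
  then show "(\<bar>g x\<bar> / a) powr p x \<le> (\<bar>g x\<bar> / lam) powr p x"
    using assms by (intro powr_mono2) auto
qed

lemma var_norm_lt:
  assumes "var_norm p g < ennreal a" "\<And>x. 0 \<le> p x"
  shows "a > 0 \<and> (\<integral>\<^sup>+ x. ennreal ((\<bar>g x\<bar> / a) powr p x) \<partial>lebesgue) \<le> 1"
proof -
  from assms(1) obtain lam where lam: "lam > 0"
    "(\<integral>\<^sup>+ x. ennreal ((\<bar>g x\<bar> / lam) powr p x) \<partial>lebesgue) \<le> 1" "ennreal lam < ennreal a"
    unfolding var_norm_def by (auto simp: Inf_less_iff)
  have "lam < a" using lam by (simp add: ennreal_less_iff)
  then show ?thesis using lam modular_anti[of lam a p g] assms(2) by auto
qed

lemma var_norm_mono: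
  assumes "\<And>y. \<bar>g y\<bar> \<le> \<bar>h y\<bar>" "\<And>x. 0 \<le> p x"
  shows "var_norm p g \<le> var_norm p h"
  unfolding var_norm_def
proof (intro Inf_superset_mono image_mono subsetI)
  fix lam assume "lam \<in> {lam. lam > 0 \<and> (\<integral>\<^sup>+ x. ennreal ((\<bar>h x\<bar> / lam) powr p x) \<partial>lebesgue) \<le> 1}"
  then have l: "lam > 0" "(\<integral>\<^sup>+ x. ennreal ((\<bar>h x\<bar> / lam) powr p x) \<partial>lebesgue) \<le> 1" by auto
  have "(\<integral>\<^sup>+ x. ennreal ((\<bar>g x\<bar> / lam) powr p x) \<partial>lebesgue) \<le> (\<integral>\<^sup>+ x. ennreal ((\<bar>h x\<bar> / lam) powr p x) \<partial>lebesgue)"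
  proof (intro nn_integral_mono ennreal_leI)
    fix x
    have "\<bar>g x\<bar> / lam \<le> \<bar>h x\<bar> / lam" using assms l by (intro divide_right_mono) auto
    then show "(\<bar>g x\<bar> / lam) powr p x \<le> (\<bar>h x\<bar> / lam) powr p x"
      using assms l by (intro powr_mono2) auto
  qed
  then show "lam \<in> {lam. lam > 0 \<and> (\<integral>\<^sup>+ x. ennreal ((\<bar>g x\<bar> / lam) powr p x) \<partial>lebesgue) \<le> 1}"
    using l by auto
qed

lemma pw_bound:
  fixes u :: "'b \<Rightarrow> real"
  assumes Z: "finite Z" "Z \<noteq> {}" and pp: "1 \<le> pp" and a: "a > 0"
    and u: "\<And>z. 0 \<le> u z" and hy: "hy \<le> (\<Sum>z\<in>Z. u z)" "0 \<le> hy"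
  shows "(hy / (real (card Z)^2 * a)) powr pp \<le> (1 / real (card Z)) * (\<Sum>z\<in>Z. (u z / a) powr pp)"
proof -
  define N where "N = real (card Z)"
  have N1: "N \<ge> 1" using Z unfolding N_def by (simp add: Suc_leI card_gt_0_iff)
  define M where "M = Max ((\<lambda>z. u z / a) ` Z)"
  have "M \<in> (\<lambda>z. u z / a) ` Z" unfolding M_def using Z by (intro Max_in) auto
  then obtain z0 where z0: "z0 \<in> Z" "M = u z0 / a" by auto
  have Mge: "u z / a \<le> M" if "z \<in> Z" for z unfolding M_def using Z that by (intro Max_ge) auto
  have M0: "0 \<le> M" using z0 u a by auto
  have "(\<Sum>z\<in>Z. u z / a) \<le> (\<Sum>z\<in>Z. M)" using Mge by (intro sum_mono) auto
  also have "\<dots> = N * M" unfolding N_def by simp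
  finally have sM: "(\<Sum>z\<in>Z. u z) / a \<le> N * M" by (simp add: sum_divide_distrib)
  have "hy / (N^2 * a) = (hy / a) / N^2" by (simp add: field_simps)
  also have "\<dots> \<le> ((\<Sum>z\<in>Z. u z) / a) / N^2" using hy a N1 by (intro divide_right_mono) auto
  also have "\<dots> \<le> (N * M) / N^2" using sM N1 by (intro divide_right_mono) auto
  also have "\<dots> = M / N" using N1 by (simp add: power2_eq_square)
  finally have hb: "hy / (N^2 * a) \<le> M / N" .
  have "(hy / (N^2 * a)) powr pp \<le> (M / N) powr pp"
    using hb hy a pp by (intro powr_mono2) auto
  also have "\<dots> = M powr pp / N powr pp" using M0 N1 by (simp add: powr_divide)
  also have "\<dots> \<le> M powr pp / N"
  proof -
    have "N powr 1 \<le> N powr pp" using N1 pp by (intro powr_mono) auto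
    then have "N \<le> N powr pp" using N1 by simp
    then show ?thesis using N1 by (intro divide_left_mono) auto
  qed
  also have "M powr pp \<le> (\<Sum>z\<in>Z. (u z / a) powr pp)"
    unfolding z0(2) using z0(1) Z by (intro member_le_sum) auto
  then have "M powr pp / N \<le> (\<Sum>z\<in>Z. (u z / a) powr pp) / N" using N1 by (intro divide_right_mono) auto
  finally show ?thesis unfolding N_def by simp
qed

lemma var_norm_sum:
  fixes h :: "'a::euclidean_space \<Rightarrow> real" and g :: "'b \<Rightarrow> 'a \<Rightarrow> real"
  assumes Z: "finite Z" "Z \<noteq> {}" and p1: "\<And>x. 1 \<le> p x" and pm: "p \<in> borel_measurable lebesgue"
    and gm: "\<And>z. z \<in> Z \<Longrightarrow> g z \<in> borel_measurable lebesgue"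
    and h: "\<And>y. \<bar>h y\<bar> \<le> (\<Sum>z\<in>Z. \<bar>g z y\<bar>)"
  shows "var_norm p h \<le> ennreal (real (card Z)^2) * (\<Sum>z\<in>Z. var_norm p (g z))"
proof (rule ennreal_le_epsilon)
  fix e :: real
  define N where "N = real (card Z)"
  have N1: "N \<ge> 1" using Z unfolding N_def by (simp add: Suc_leI card_gt_0_iff)
  define S where "S = (\<Sum>z\<in>Z. var_norm p (g z))"
  assume "ennreal (real (card Z)^2) * (\<Sum>z\<in>Z. var_norm p (g z)) < top" and e: "0 < e"
  then have "S \<noteq> top" using N1 unfolding S_def N_def by (auto simp: ennreal_mult_eq_top_iff)
  then obtain S' where S': "S = ennreal S'" "0 \<le> S'" by (cases S rule: ennreal_cases) auto
  define a where "a = S' + e / N^2"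
  have a0: "a > 0" unfolding a_def using S' e N1 by (auto intro!: add_nonneg_pos)
  have p0: "\<And>x. 0 \<le> p x" using p1 by (meson order.trans zero_le_one)
  have modg: "(\<integral>\<^sup>+ x. ennreal ((\<bar>g z x\<bar> / a) powr p x) \<partial>lebesgue) \<le> 1" if z: "z \<in> Z" for z
  proof -
    have "var_norm p (g z) \<le> S" unfolding S_def using z Z by (intro member_le_sum) auto
    also have "S < ennreal a" unfolding S'(1) a_def using e N1 S' by (subst ennreal_less_iff) auto
    finally show ?thesis using var_norm_lt[of p "g z" a] p0 by auto
  qed
  have "(\<integral>\<^sup>+ y. ennreal ((\<bar>h y\<bar> / (N^2 * a)) powr p y) \<partial>lebesgue)
      \<le> (\<integral>\<^sup>+ y. ennreal (1 / N) * (\<Sum>z\<in>Z. ennreal ((\<bar>g z y\<bar> / a) powr p y)) \<partial>lebesgue)"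
  proof (intro nn_integral_mono)
    fix y
    have "(\<bar>h y\<bar> / (N^2 * a)) powr p y \<le> (1 / N) * (\<Sum>z\<in>Z. (\<bar>g z y\<bar> / a) powr p y)"
      unfolding N_def using Z p1 a0 h by (intro pw_bound) auto
    then have "ennreal ((\<bar>h y\<bar> / (N^2 * a)) powr p y) \<le> ennreal ((1 / N) * (\<Sum>z\<in>Z. (\<bar>g z y\<bar> / a) powr p y))"
      by (rule ennreal_leI)
    also have "\<dots> = ennreal (1 / N) * (\<Sum>z\<in>Z. ennreal ((\<bar>g z y\<bar> / a) powr p y))"
      using N1 by (subst ennreal_mult) (auto intro: sum_nonneg)
    finally show "ennreal ((\<bar>h y\<bar> / (N^2 * a)) powr p y) \<le> ennreal (1 / N) * (\<Sum>z\<in>Z. ennreal ((\<bar>g z y\<bar> / a) powr p y))" .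
  qed
  also have "\<dots> = ennreal (1 / N) * (\<Sum>z\<in>Z. (\<integral>\<^sup>+ y. ennreal ((\<bar>g z y\<bar> / a) powr p y) \<partial>lebesgue))"
  proof -
    have mz: "(\<lambda>y. ennreal ((\<bar>g z y\<bar> / a) powr p y)) \<in> borel_measurable lebesgue" if "z \<in> Z" for z
      using gm[OF that] pm by measurable
    have "(\<integral>\<^sup>+ y. ennreal (1 / N) * (\<Sum>z\<in>Z. ennreal ((\<bar>g z y\<bar> / a) powr p y)) \<partial>lebesgue)
       = ennreal (1 / N) * (\<integral>\<^sup>+ y. (\<Sum>z\<in>Z. ennreal ((\<bar>g z y\<bar> / a) powr p y)) \<partial>lebesgue)"
      using mz by (intro nn_integral_cmult borel_measurable_sum) auto
    also have "(\<integral>\<^sup>+ y. (\<Sum>z\<in>Z. ennreal ((\<bar>g z y\<bar> / a) powr p y)) \<partial>lebesgue)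
       = (\<Sum>z\<in>Z. (\<integral>\<^sup>+ y. ennreal ((\<bar>g z y\<bar> / a) powr p y) \<partial>lebesgue))"
      using mz by (intro nn_integral_sum) auto
    finally show ?thesis .
  qed
  also have "\<dots> \<le> ennreal (1 / N) * (\<Sum>z\<in>Z. 1)"
    using modg by (intro mult_left_mono sum_mono) auto
  also have "\<dots> = 1" using N1 unfolding N_def
    by (simp add: ennreal_of_nat_eq_real_of_nat ennreal_mult[symmetric])
  finally have "var_norm p h \<le> ennreal (N^2 * a)"
    using a0 N1 by (intro var_norm_le) auto
  also have "N^2 * a = N^2 * S' + e" unfolding a_def using N1 by (simp add: field_simps)
  also have "ennreal (N^2 * S' + e) = ennreal (N^2) * S + ennreal e"
    using S' e by (simp add: ennreal_plus ennreal_mult)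
  finally show "var_norm p h \<le> ennreal (real (card Z)^2) * (\<Sum>z\<in>Z. var_norm p (g z)) + ennreal e"
    unfolding S_def N_def .
qed

lemma G_closed:
  fixes f p :: "'a::euclidean_space \<Rightarrow> real"
  assumes fm: "f \<in> borel_measurable lebesgue" and pm: "p \<in> borel_measurable lebesgue"
    and p0: "\<And>x. 0 \<le> p x"
  shows "closed {x. var_norm p (\<lambda>y. f y * indicator (ball x s) y) \<le> c}"
  unfolding closed_sequential_limits
proof (intro allI impI, elim conjE)
  fix X l assume Xc: "\<forall>n. X n \<in> {x. var_norm p (\<lambda>y. f y * indicator (ball x s) y) \<le> c}"
    and Xl: "X \<longlonglongrightarrow> l"
  show "l \<in> {x. var_norm p (\<lambda>y. f y * indicator (ball x s) y) \<le> c}"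
  proof (cases "c = top")
    case True then show ?thesis by simp
  next
    case False
    then obtain c' where c': "c = ennreal c'" "0 \<le> c'" by (cases c rule: ennreal_cases) auto
    have "var_norm p (\<lambda>y. f y * indicator (ball l s) y) \<le> c + ennreal e" if e: "e > 0" for e
    proof -
      define b where "b = c' + e"
      define u where "u n y = ennreal ((\<bar>f y * indicator (ball (X n) s) y\<bar> / b) powr p y)" for n y
      have um: "u n \<in> borel_measurable lebesgue" for n
      proof -
        have "ball (X n) s \<in> sets lebesgue" by (intro sets_completionI_sets) auto
        then have [measurable]: "Measurable.pred lebesgue (\<lambda>x. x \<in> ball (X n) s)" by (simp add: pred_def)
        note [measurable] = fm pm
        show ?thesis unfolding u_def by measurable
      qed
      have mod_n: "integral\<^sup>N lebesgue (u n) \<le> 1" for n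
      proof -
        have "var_norm p (\<lambda>y. f y * indicator (ball (X n) s) y) < ennreal b"
          using Xc c' e unfolding b_def by (auto intro: le_less_trans simp: ennreal_less_iff)
        then show ?thesis unfolding u_def using var_norm_lt p0 by blast
      qed
      have pwl: "ennreal ((\<bar>f y * indicator (ball l s) y\<bar> / b) powr p y) \<le> liminf (\<lambda>n. u n y)" for y
      proof (cases "y \<in> ball l s")
        case True
        then have "dist l y < s" by simp
        then have "eventually (\<lambda>n. dist (X n) l < s - dist l y) sequentially"
          using Xl by (auto simp: tendsto_iff)
        then have "eventually (\<lambda>n. y \<in> ball (X n) s) sequentially"
          by eventually_elim (auto intro: le_less_trans dist_triangle simp: algebra_simps)
        then have "eventually (\<lambda>n. ennreal ((\<bar>f y * indicator (ball l s) y\<bar> / b) powr p y) \<le> u n y) sequentially"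
          by eventually_elim (use True in \<open>auto simp: u_def\<close>)
        then show ?thesis by (rule Liminf_bounded)
      next
        case False
        then show ?thesis by simp
      qed
      have "(\<integral>\<^sup>+ y. ennreal ((\<bar>f y * indicator (ball l s) y\<bar> / b) powr p y) \<partial>lebesgue)
          \<le> (\<integral>\<^sup>+ y. liminf (\<lambda>n. u n y) \<partial>lebesgue)"
        using pwl by (intro nn_integral_mono)
      also have "\<dots> \<le> liminf (\<lambda>n. integral\<^sup>N lebesgue (u n))"
        using um by (rule nn_integral_liminf)
      also have "\<dots> \<le> 1" using mod_n by (intro Liminf_le) auto
      finally have "var_norm p (\<lambda>y. f y * indicator (ball l s) y) \<le> ennreal b"
        using e c' unfolding b_def by (intro var_norm_le) auto
      also have "ennreal b = c + ennreal e" unfolding b_def c' using e c' by (simp add: ennreal_plus)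
      finally show ?thesis .
    qed
    then show ?thesis by (auto intro: ennreal_le_epsilon)
  qed
qed

lemma G_borel:
  fixes f p :: "'a::euclidean_space \<Rightarrow> real"
  assumes fm: "f \<in> borel_measurable lebesgue" and pm: "p \<in> borel_measurable lebesgue"
    and p0: "\<And>x. 0 \<le> p x"
  shows "(\<lambda>x. var_norm p (\<lambda>y. f y * indicator (ball x s) y)) \<in> borel_measurable borel"
  by (rule borel_measurableI_le) (use G_closed[OF assms] in auto)

lemma ennpow_mono:
  assumes "a \<le> b" "0 \<le> s"
  shows "ennpow a s \<le> ennpow b s"
proof (cases "b = top")
  case True then show ?thesis by (simp add: ennpow_def)
next
  case False
  then have "a \<noteq> top" using assms top_unique by auto
  moreover have "enn2real a \<le> enn2real b" using assms False by (intro enn2real_mono) (auto simp: top.not_eq_extremum)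
  ultimately show ?thesis using False assms unfolding ennpow_def
    by (auto intro!: ennreal_leI powr_mono2)
qed

lemma ennpow_cmult:
  assumes "0 < c" "0 < s"
  shows "ennpow (ennreal c * a) s = ennreal (c powr s) * ennpow a s"
proof (cases "a = top")
  case True then show ?thesis using assms by (simp add: ennpow_def ennreal_mult_top)
next
  case False
  then have "ennreal c * a \<noteq> top" using assms by (simp add: ennreal_mult_eq_top_iff)
  moreover have "enn2real (ennreal c * a) = c * enn2real a" using assms by (simp add: enn2real_mult)
  ultimately show ?thesis using False assms unfolding ennpow_def
    by (simp add: powr_mult ennreal_mult)
qed

lemma ennpow_meas[measurable]:
  assumes [measurable]: "F \<in> borel_measurable M"
  shows "(\<lambda>x. ennpow (F x) s) \<in> borel_measurable M"
  unfolding ennpow_def by measurable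

lemma borel_to_lebesgue:
  fixes F :: "'a::euclidean_space \<Rightarrow> 'b::topological_space"
  assumes "F \<in> borel_measurable borel"
  shows "F \<in> borel_measurable lebesgue"
  using assms by (intro measurable_completion) simp

lemma transl_integral:
  fixes F :: "'a::euclidean_space \<Rightarrow> ennreal" and z :: 'a
  assumes [measurable]: "F \<in> borel_measurable borel"
  shows "(\<integral>\<^sup>+ x. F (x + z) \<partial>lebesgue) = (\<integral>\<^sup>+ x. F x \<partial>lebesgue)"
proof -
  have "(\<integral>\<^sup>+ x. F x \<partial>lebesgue) = (\<integral>\<^sup>+ x. F x \<partial>lborel)" by (rule nn_integral_completion)
  also have "\<dots> = (\<integral>\<^sup>+ x. F x \<partial>(distr lborel borel ((+) z)))" by (simp add: lborel_distr_plus)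
  also have "\<dots> = (\<integral>\<^sup>+ x. F (z + x) \<partial>lborel)" by (intro nn_integral_distr) auto
  also have "\<dots> = (\<integral>\<^sup>+ x. F (x + z) \<partial>lebesgue)" by (simp add: nn_integral_completion add.commute)
  finally show ?thesis ..
qed

lemma transl_AE:
  fixes F :: "'a::euclidean_space \<Rightarrow> ennreal" and z :: 'a
  assumes [measurable]: "F \<in> borel_measurable borel" and ae: "AE y in lebesgue. F y \<le> E"
  shows "AE x in lebesgue. F (x + z) \<le> E"
proof -
  have "AE y in lborel. F y \<le> E" using ae by (simp add: AE_completion_iff)
  then have "AE y in distr lborel borel ((+) z). F y \<le> E" by (subst lborel_distr_plus)
  then have "AE x in lborel. F (z + x) \<le> E" by (subst (asm) AE_distr_iff) auto
  then show ?thesis by (simp add: AE_completion_iff add.commute)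
qed

lemma q_real:
  assumes "1 \<le> q" "q \<noteq> top"
  shows "1 \<le> enn2real q"
proof -
  have "enn2real 1 \<le> enn2real q" using assms by (intro enn2real_mono) (auto simp: top.not_eq_extremum)
  then show ?thesis by simp
qed

lemma Lq_mono:
  fixes G H :: "'a::euclidean_space \<Rightarrow> ennreal"
  assumes Gm: "G \<in> borel_measurable lebesgue" and le: "\<And>x. G x \<le> H x" and q: "1 \<le> q"
  shows "Lq_norm q G \<le> Lq_norm q H"
proof (cases "q = top")
  case True then show ?thesis unfolding Lq_norm_def using Gm le by (simp add: esssup_mono)
next
  case False
  then have q1: "1 \<le> enn2real q" using q_real q by auto
  show ?thesis unfolding Lq_norm_def using False q1
    by (auto intro!: ennpow_mono nn_integral_mono le)
qed

lemma Lq_cover: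
  fixes G H :: "'a::euclidean_space \<Rightarrow> ennreal"
  assumes Gm[measurable]: "G \<in> borel_measurable borel" and Hm: "H \<in> borel_measurable lebesgue"
    and Z: "finite Z" "Z \<noteq> {}" and c: "c > 0" and q: "1 \<le> q"
    and HG: "\<And>x. H x \<le> ennreal c * (\<Sum>z\<in>Z. G (x + z))"
  shows "Lq_norm q H \<le> ennreal (c * real (card Z) * real (card Z)) * Lq_norm q G"
proof -
  define N where "N = real (card Z)"
  have N1: "N \<ge> 1" using Z unfolding N_def by (simp add: Suc_leI card_gt_0_iff)
  have cardN: "of_nat (card Z) = ennreal N" unfolding N_def by (simp add: ennreal_of_nat_eq_real_of_nat)
  have key: "ennreal c * (ennreal N * E) \<le> ennreal (c * N * N) * E" for E
  proof -
    have "E \<le> ennreal N * E" using N1 mult_right_mono[of 1 "ennreal N" E] by (simp add: ennreal_ge_1)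
    then have "ennreal N * E \<le> ennreal N * (ennreal N * E)" by (rule mult_left_mono) auto
    then have "ennreal c * (ennreal N * E) \<le> ennreal c * (ennreal N * (ennreal N * E))" by (rule mult_left_mono) auto
    also have "\<dots> = ennreal (c * N * N) * E" using c N1 by (simp add: ennreal_mult mult.assoc)
    finally show ?thesis .
  qed
  show ?thesis
  proof (cases "q = top")
    case True
    define E where "E = esssup lebesgue G"
    have "AE x in lebesgue. \<forall>z\<in>Z. G (x + z) \<le> E"
      using Z(1) by (intro AE_finite_allI transl_AE[OF Gm]) (auto simp: E_def esssup_AE)
    then have "AE x in lebesgue. H x \<le> ennreal (c * N * N) * E"
    proof eventually_elim
      case (elim x)
      have "H x \<le> ennreal c * (\<Sum>z\<in>Z. G (x + z))" by (rule HG)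
      also have "\<dots> \<le> ennreal c * (of_nat (card Z) * E)"
        using elim by (intro mult_left_mono sum_bounded_above) auto
      also have "\<dots> \<le> ennreal (c * N * N) * E" unfolding cardN by (rule key)
      finally show ?case .
    qed
    then have "esssup lebesgue H \<le> ennreal (c * N * N) * E" using Hm by (intro esssup_I)
    then show ?thesis using True unfolding Lq_norm_def E_def N_def by simp
  next
    case False
    define q' where "q' = enn2real q"
    have q1: "1 \<le> q'" unfolding q'_def using q_real q False by auto
    define I where "I = (\<integral>\<^sup>+ x. ennpow (G x) q' \<partial>lebesgue)"
    define K where "K = (c * N) powr q'"
    have cN: "c * N > 0" using c N1 by auto
    have pw: "ennpow (H x) q' \<le> ennreal K * (\<Sum>z\<in>Z. ennpow (G (x + z)) q')" for x
    proof -
      define M where "M = Max ((\<lambda>z. G (x + z)) ` Z)"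
      have "M \<in> (\<lambda>z. G (x + z)) ` Z" unfolding M_def using Z by (intro Max_in) auto
      then obtain z0 where z0: "z0 \<in> Z" "M = G (x + z0)" by auto
      have "H x \<le> ennreal c * (\<Sum>z\<in>Z. G (x + z))" by (rule HG)
      also have "\<dots> \<le> ennreal c * (of_nat (card Z) * M)"
        unfolding M_def using Z by (intro mult_left_mono sum_bounded_above Max_ge) auto
      also have "\<dots> = ennreal (c * N) * G (x + z0)" unfolding cardN z0(2) using c N1
        by (simp add: ennreal_mult mult.assoc)
      finally have "ennpow (H x) q' \<le> ennpow (ennreal (c * N) * G (x + z0)) q'"
        using q1 by (intro ennpow_mono) auto
      also have "\<dots> = ennreal K * ennpow (G (x + z0)) q'" unfolding K_def
        using cN q1 by (intro ennpow_cmult) auto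
      also have "\<dots> \<le> ennreal K * (\<Sum>z\<in>Z. ennpow (G (x + z)) q')"
        using z0 Z by (intro mult_left_mono member_le_sum) auto
      finally show ?thesis .
    qed
    have mz: "(\<lambda>x. ennpow (G (x + z)) q') \<in> borel_measurable lebesgue" for z
      by (intro borel_to_lebesgue) measurable
    have "(\<integral>\<^sup>+ x. ennpow (H x) q' \<partial>lebesgue) \<le> (\<integral>\<^sup>+ x. ennreal K * (\<Sum>z\<in>Z. ennpow (G (x + z)) q') \<partial>lebesgue)"
      using pw by (intro nn_integral_mono)
    also have "\<dots> = ennreal K * (\<integral>\<^sup>+ x. (\<Sum>z\<in>Z. ennpow (G (x + z)) q') \<partial>lebesgue)"
      using mz by (intro nn_integral_cmult borel_measurable_sum) auto
    also have "(\<integral>\<^sup>+ x. (\<Sum>z\<in>Z. ennpow (G (x + z)) q') \<partial>lebesgue) = (\<Sum>z\<in>Z. (\<integral>\<^sup>+ x. ennpow (G (x + z)) q' \<partial>lebesgue))"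
      using mz by (intro nn_integral_sum) auto
    also have "\<dots> = (\<Sum>z\<in>Z. I)" unfolding I_def
      by (intro sum.cong refl transl_integral[of "\<lambda>y. ennpow (G y) q'"]) measurable
    also have "\<dots> = ennreal N * I" using cardN by simp
    also have "ennreal K * (ennreal N * I) = ennreal (K * N) * I"
      using N1 unfolding K_def by (simp add: ennreal_mult mult.assoc)
    finally have intle: "(\<integral>\<^sup>+ x. ennpow (H x) q' \<partial>lebesgue) \<le> ennreal (K * N) * I" .
    have "Lq_norm q H = ennpow (\<integral>\<^sup>+ x. ennpow (H x) q' \<partial>lebesgue) (1 / q')"
      unfolding Lq_norm_def q'_def using False by simp
    also have "\<dots> \<le> ennpow (ennreal (K * N) * I) (1 / q')"
      using intle q1 by (intro ennpow_mono) auto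
    also have "\<dots> = ennreal ((K * N) powr (1 / q')) * ennpow I (1 / q')"
      using q1 N1 cN unfolding K_def by (intro ennpow_cmult) (auto intro!: mult_pos_pos)
    also have "(K * N) powr (1 / q') = (c * N) * N powr (1 / q')"
      unfolding K_def using c cN N1 q1 by (simp add: powr_mult powr_powr)
    also have "\<dots> \<le> c * N * N"
    proof -
      have "N powr (1 / q') \<le> N powr 1" using N1 q1 by (intro powr_mono) auto
      then show ?thesis using cN N1 by (simp add: mult_left_mono)
    qed
    then have "ennreal ((c * N) * N powr (1 / q')) * ennpow I (1 / q') \<le> ennreal (c * N * N) * ennpow I (1 / q')"
      by (intro mult_right_mono ennreal_leI) auto
    also have "ennpow I (1 / q') = Lq_norm q G"
      unfolding Lq_norm_def I_def q'_def using False by simp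
    finally show ?thesis unfolding N_def .
  qed
qed

lemma amalg_compare:
  fixes p :: "'a::euclidean_space \<Rightarrow> real"
  assumes pm: "p \<in> borel_measurable lebesgue" and p1: "\<And>x. 1 \<le> p x" and q: "1 \<le> q"
    and st: "0 < s" "s \<le> t"
  shows "\<exists>K>0. \<forall>f \<in> borel_measurable lebesgue.
           amalg_norm p q s f \<le> amalg_norm p q t f \<and> amalg_norm p q t f \<le> ennreal K * amalg_norm p q s f"
proof -
  have p0: "\<And>x. 0 \<le> p x" using p1 by (meson order.trans zero_le_one)
  have "cball (0::'a) t \<subseteq> (\<Union>z\<in>cball 0 t. ball z s)" using st by auto
  then obtain Z where Z: "Z \<subseteq> cball 0 t" "finite Z" "cball (0::'a) t \<subseteq> (\<Union>z\<in>Z. ball z s)"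
    using compactE_image[OF compact_cball[of 0 t], of "cball 0 t" "\<lambda>z. ball z s"] by blast
  have Zne: "Z \<noteq> {}" using Z(3) st by auto
  define N where "N = real (card Z)"
  have N1: "N \<ge> 1" using Z(2) Zne unfolding N_def by (simp add: Suc_leI card_gt_0_iff)
  define K where "K = N^2 * N * N"
  have K0: "K > 0" unfolding K_def using N1 by auto
  have ballm: "\<And>x r. ball x r \<in> sets lebesgue" by (intro sets_completionI_sets) auto
  show ?thesis
  proof (intro exI[of _ K] conjI K0 ballI)
    fix f :: "'a \<Rightarrow> real" assume fm: "f \<in> borel_measurable lebesgue"
    define G where "G r x = var_norm p (\<lambda>y. f y * indicator (ball x r) y)" for r x
    have Gb: "G r \<in> borel_measurable borel" for r unfolding G_def using fm pm p0 by (intro G_borel) auto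
    have gm: "(\<lambda>y. f y * indicator (ball x r) y) \<in> borel_measurable lebesgue" for x r
      using fm ballm by (intro borel_measurable_times borel_measurable_indicator) auto
    have "Lq_norm q (G s) \<le> Lq_norm q (G t)"
    proof (rule Lq_mono[OF borel_to_lebesgue[OF Gb] _ q])
      fix x show "G s x \<le> G t x" unfolding G_def
        using st p0 by (intro var_norm_mono) (auto simp: indicator_def)
    qed
    then show "amalg_norm p q s f \<le> amalg_norm p q t f" unfolding amalg_norm_def G_def .
    have pwc: "G t x \<le> ennreal (N^2) * (\<Sum>z\<in>Z. G s (x + z))" for x
    proof -
      have "\<bar>f y * indicator (ball x t) y\<bar> \<le> (\<Sum>z\<in>Z. \<bar>f y * indicator (ball (x + z) s) y\<bar>)" for y
      proof (cases "y \<in> ball x t")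
        case True
        then have "y - x \<in> cball 0 t" by (simp add: dist_norm norm_minus_commute)
        then obtain z where z: "z \<in> Z" "y - x \<in> ball z s" using Z(3) by blast
        then have "y \<in> ball (x + z) s" by (simp add: dist_norm algebra_simps)
        then have "\<bar>f y * indicator (ball x t) y\<bar> = \<bar>f y * indicator (ball (x + z) s) y\<bar>"
          using True by simp
        also have "\<dots> \<le> (\<Sum>z\<in>Z. \<bar>f y * indicator (ball (x + z) s) y\<bar>)"
          using z Z(2) by (intro member_le_sum) auto
        finally show ?thesis .
      next
        case False then show ?thesis by (simp add: sum_nonneg)
      qed
      then show ?thesis unfolding G_def N_def
        using Z(2) Zne p1 pm gm by (intro var_norm_sum) auto
    qed
    have "Lq_norm q (G t) \<le> ennreal (N^2 * real (card Z) * real (card Z)) * Lq_norm q (G s)"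
      using Gb borel_to_lebesgue[OF Gb] Z(2) Zne N1 q pwc by (intro Lq_cover) auto
    then show "amalg_norm p q t f \<le> ennreal K * amalg_norm p q s f"
      unfolding amalg_norm_def G_def K_def N_def .
  qed
qed

theorem lemma3p1:
  fixes p :: "'a::euclidean_space \<Rightarrow> real" and q \<alpha> :: ennreal and \<rho> r :: real
  assumes "var_exp p"
    and "1 \<le> q" and "1 \<le> \<alpha>"
    and "\<forall>x. ennreal (p x) \<le> \<alpha>" and "\<alpha> \<le> q"
    and "\<rho> > 0" and "r > 0"
  shows "\<exists>C1>0. \<exists>C2>0. \<forall>f \<in> borel_measurable lebesgue.
           ennreal C1 * amalg_norm p q (\<rho> * r) f \<le> amalg_norm p q r f
         \<and> amalg_norm p q r f \<le> ennreal C2 * amalg_norm p q (\<rho> * r) f"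
proof -
  have pm: "p \<in> borel_measurable lebesgue" and p1: "\<And>x. 1 \<le> p x"
    using assms(1) unfolding var_exp_def by auto
  show ?thesis
  proof (cases "1 \<le> \<rho>")
    case True
    have "r \<le> \<rho> * r" using True assms by simp
    then obtain K where K: "K > 0" "\<forall>f \<in> borel_measurable lebesgue.
           amalg_norm p q r f \<le> amalg_norm p q (\<rho> * r) f \<and> amalg_norm p q (\<rho> * r) f \<le> ennreal K * amalg_norm p q r f"
      using amalg_compare[OF pm p1 assms(2), of r "\<rho> * r"] assms by auto
    have "\<forall>f \<in> borel_measurable lebesgue. ennreal (1 / K) * amalg_norm p q (\<rho> * r) f \<le> amalg_norm p q r f
         \<and> amalg_norm p q r f \<le> amalg_norm p q (\<rho> * r) f"
    proof
      fix f :: "'a \<Rightarrow> real" assume f: "f \<in> borel_measurable lebesgue"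
      have "ennreal (1 / K) * amalg_norm p q (\<rho> * r) f \<le> ennreal (1 / K) * (ennreal K * amalg_norm p q r f)"
        using K f by (intro mult_left_mono) auto
      also have "\<dots> = amalg_norm p q r f" using K
        by (simp add: mult.assoc[symmetric] ennreal_mult[symmetric])
      finally show "ennreal (1 / K) * amalg_norm p q (\<rho> * r) f \<le> amalg_norm p q r f
         \<and> amalg_norm p q r f \<le> amalg_norm p q (\<rho> * r) f" using K f by auto
    qed
    then show ?thesis using K(1) by (intro exI[of _ "1 / K"] conjI exI[of _ 1]) auto
  next
    case False
    have "\<rho> * r \<le> r" using False assms by simp
    then obtain K where K: "K > 0" "\<forall>f \<in> borel_measurable lebesgue.
           amalg_norm p q (\<rho> * r) f \<le> amalg_norm p q r f \<and> amalg_norm p q r f \<le> ennreal K * amalg_norm p q (\<rho> * r) f"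
      using amalg_compare[OF pm p1 assms(2), of "\<rho> * r" r] assms by auto
    show ?thesis
      by (intro exI[of _ 1] exI[of _ K] conjI ballI) (use K in auto)
  qed
qed

end
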